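(* In the upper half-space model $\mathbb{H}^3=\{x_3>0\}$ with metric $\frac{1}{x_3^2}(dx_1^2+dx_2^2+dx_3^2)$, let $E$ be a complete end of revolution about the $x_3$-axis with profile curve $\gamma:[0,\infty)\to\mathbb{H}^3$, $\gamma(s)=(\gamma_1(s),0,\gamma_2(s))$, parametrized by hyperbolic arc length, $\gamma_1>0$. If $E$ is non-parabolic, then $\sup_{s\in[0,\infty)}\gamma_1(s)<\infty$.
   Context: $E=\{(\gamma_1(s)\cos\theta,\gamma_1(s)\sin\theta,\gamma_2(s)): s\ge0,\theta\in[0,2\pi)\}$ with the induced metric; arc length parametrization means $(\dot\gamma_1^2+\dot\gamma_2^2)/\gamma_2^2=1$. An end is parabolic if every bounded harmonic function on it is determined by its boundary values. *)

theory Defs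
  imports "HOL-Analysis.Analysis"
begin

text \<open>Coordinates on the end of revolution E: (s, theta), s \<ge> 0 hyperbolic arc length
  along the profile curve, theta the rotation angle (functions are 2pi-periodic in theta).
  The induced metric is ds^2 + rho(s)^2 dtheta^2 with rho = gamma1 / gamma2.\<close>

definition ps :: "(real \<Rightarrow> real \<Rightarrow> real) \<Rightarrow> real \<Rightarrow> real \<Rightarrow> real" where
  "ps u = (\<lambda>s t. deriv (\<lambda>x. u x t) s)"

definition pt :: "(real \<Rightarrow> real \<Rightarrow> real) \<Rightarrow> real \<Rightarrow> real \<Rightarrow> real" where
  "pt u = (\<lambda>s t. deriv (\<lambda>y. u s y) t)"

definition C2_on :: "(real \<times> real) set \<Rightarrow> (real \<Rightarrow> real \<Rightarrow> real) \<Rightarrow> bool" where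
  "C2_on S u \<longleftrightarrow>
     (\<forall>g\<in>{u, ps u, pt u}. \<forall>(s,t)\<in>S.
        (\<lambda>x. g x t) differentiable (at s) \<and> (\<lambda>y. g s y) differentiable (at t)) \<and>
     (\<forall>g\<in>{u, ps u, pt u, ps (ps u), ps (pt u), pt (ps u), pt (pt u)}.
        continuous_on S (\<lambda>(s,t). g s t))"

text \<open>Laplace--Beltrami operator of the metric ds^2 + rho^2 dtheta^2.\<close>
definition laplacian_rev :: "(real \<Rightarrow> real) \<Rightarrow> (real \<Rightarrow> real \<Rightarrow> real) \<Rightarrow> real \<Rightarrow> real \<Rightarrow> real" where
  "laplacian_rev \<rho> u s t =
     deriv (\<lambda>x. \<rho> x * ps u x t) s / \<rho> s + pt (pt u) s t / (\<rho> s)^2"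

definition bounded_harmonic_on_end :: "(real \<Rightarrow> real) \<Rightarrow> (real \<Rightarrow> real \<Rightarrow> real) \<Rightarrow> bool" where
  "bounded_harmonic_on_end \<rho> u \<longleftrightarrow>
     (\<forall>s t. u s (t + 2 * pi) = u s t) \<and>
     continuous_on ({0..} \<times> UNIV) (\<lambda>(s,t). u s t) \<and>
     C2_on ({0<..} \<times> UNIV) u \<and>
     (\<forall>s>0. \<forall>t. laplacian_rev \<rho> u s t = 0) \<and>
     bounded ((\<lambda>(s,t). u s t) ` ({0..} \<times> UNIV))"

definition parabolic_end :: "(real \<Rightarrow> real) \<Rightarrow> bool" where
  "parabolic_end \<rho> \<longleftrightarrow>
     (\<forall>u v. bounded_harmonic_on_end \<rho> u \<longrightarrow> bounded_harmonic_on_end \<rho> v \<longrightarrow>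
        (\<forall>t. u 0 t = v 0 t) \<longrightarrow> (\<forall>s\<ge>0. \<forall>t. u s t = v s t))"

end

theory Submission
  imports Defs
begin

lemma periodic_int:
  fixes f :: "real \<Rightarrow> real"
  assumes "\<forall>t. f (t + p) = f t"
  shows "f (t + of_int n * p) = f t"
proof (induct n rule: int_induct[where k=0])
  case base then show ?case by simp
next
  case (step1 i)
  have "f (t + of_int (i+1) * p) = f ((t + of_int i * p) + p)" by (simp add: algebra_simps)
  then show ?case using assms step1 by simp
next
  case (step2 i)
  have "f (t + of_int i * p) = f ((t + of_int (i - 1) * p) + p)" by (simp add: algebra_simps)
  then show ?case using assms step2 by simp
qed

lemma periodic_red:
  fixes f :: "real \<Rightarrow> real"
  assumes "\<forall>t. f (t + 2*pi) = f t"
  shows "\<exists>t'\<in>{0..2*pi}. f t = f t'"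
proof -
  define n where "n = - \<lfloor>t / (2*pi)\<rfloor>"
  define t' where "t' = t + of_int n * (2*pi)"
  have "f t' = f t" unfolding t'_def by (rule periodic_int[OF assms])
  moreover have "t' \<ge> 0"
  proof -
    have "of_int \<lfloor>t / (2*pi)\<rfloor> \<le> t / (2*pi)" by (rule of_int_floor_le)
    moreover have "0 < 2*pi" by simp
    ultimately have "of_int \<lfloor>t / (2*pi)\<rfloor> * (2*pi) \<le> t" using pos_le_divide_eq by blast
    then show ?thesis unfolding t'_def n_def by simp
  qed
  moreover have "t' \<le> 2*pi"
  proof -
    have "t / (2*pi) < of_int \<lfloor>t / (2*pi)\<rfloor> + 1" by (rule real_of_int_floor_add_one_gt)
    then have "t < (of_int \<lfloor>t / (2*pi)\<rfloor> + 1) * (2*pi)" using pi_gt_zero by (simp add: field_simps)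
    then show ?thesis unfolding t'_def n_def by (simp add: algebra_simps)
  qed
  ultimately show ?thesis by (intro bexI[of _ t']) auto
qed

lemma rise:
  fixes f f' k gg :: "real \<Rightarrow> real"
  assumes e: "e > 0"
    and fd: "\<forall>x\<in>{a-e<..<a+e}. (f has_real_derivative f' x) (at x)"
    and kc: "\<forall>x\<in>{a-e<..<a+e}. k x > 0 \<and> gg x = k x * f' x"
    and cd: "(gg has_real_derivative c) (at a)" and c: "c > 0" and c0: "gg a = 0"
  shows "\<exists>b. a < b \<and> b < a + e \<and> f a < f b"
proof -
  obtain d where d: "d > 0" "\<forall>h>0. h < d \<longrightarrow> gg a < gg (a + h)"
    using DERIV_pos_inc_right[OF cd c] by blast
  define b where "b = a + min d e / 2"
  have ab: "a < b" "b < a + e" using d e unfolding b_def by auto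
  have cont: "continuous_on {a..b} f"
    using fd ab e by (intro DERIV_atLeastAtMost_imp_continuous_on) auto
  have "f a < f b"
  proof (rule DERIV_pos_imp_increasing_open[OF ab(1) _ cont])
    fix x assume x: "a < x" "x < b"
    have xin: "x \<in> {a-e<..<a+e}" using x ab e by auto
    have "x - a < d" using x unfolding b_def by auto
    then have "gg a < gg (a + (x - a))" using d(2)[rule_format, of "x - a"] x by auto
    then have "gg x > 0" using c0 by simp
    then have "f' x > 0" using kc xin by (metis zero_less_mult_pos)
    then show "\<exists>y. DERIV f x :> y \<and> y > 0" using fd xin by blast
  qed
  then show ?thesis using ab by blast
qed

lemma C2D:
  assumes "C2_on ({0<..} \<times> UNIV) u" "s > 0"
  shows "(\<lambda>x. u x t) differentiable (at s)" "(\<lambda>y. u s y) differentiable (at t)"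
    "(\<lambda>x. ps u x t) differentiable (at s)" "(\<lambda>y. pt u s y) differentiable (at t)"
  using assms unfolding C2_on_def by auto

lemma C2D':
  assumes "C2_on ({0<..} \<times> UNIV) u" "s > 0"
  shows "((\<lambda>x. u x t) has_real_derivative ps u s t) (at s)"
    "((\<lambda>y. u s y) has_real_derivative pt u s t) (at t)"
    "((\<lambda>y. pt u s y) has_real_derivative pt (pt u) s t) (at t)"
  using C2D[OF assms] unfolding ps_def pt_def
  by (auto simp: DERIV_deriv_iff_real_differentiable)

lemma maxp:
  fixes \<rho> H G P :: "real \<Rightarrow> real" and u v :: "real \<Rightarrow> real \<Rightarrow> real"
  assumes rpos: "\<forall>s\<ge>0. \<rho> s > 0"
   and rdiff: "\<forall>s>0. \<rho> differentiable (at s)"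
   and Hd: "\<forall>s>0. (H has_real_derivative 1 / \<rho> s) (at s)"
   and Gd: "\<forall>s>0. (G has_real_derivative P s / \<rho> s) (at s)"
   and Pd: "\<forall>s>0. (P has_real_derivative \<rho> s) (at s)"
   and Hc: "\<forall>R. continuous_on {0..R} H" and Gc: "\<forall>R. continuous_on {0..R} G"
   and H0: "H 0 = 0" and G0: "G 0 = 0"
   and Hmono: "\<forall>s r. 0 \<le> s \<longrightarrow> s \<le> r \<longrightarrow> H s \<le> H r"
   and Gmono: "\<forall>s r. 0 \<le> s \<longrightarrow> s \<le> r \<longrightarrow> G s \<le> G r"
   and Hunb: "\<forall>K. \<exists>s\<ge>0. H s > K"
   and hu: "bounded_harmonic_on_end \<rho> u" and hv: "bounded_harmonic_on_end \<rho> v"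
   and bd: "\<forall>t. u 0 t = v 0 t"
   and s1: "s1 \<ge> 0"
  shows "u s1 t1 \<le> v s1 t1"
proof (rule ccontr)
  assume nt: "\<not> u s1 t1 \<le> v s1 t1"
  define \<eta> where "\<eta> = u s1 t1 - v s1 t1"
  have \<eta>: "\<eta> > 0" using nt unfolding \<eta>_def by simp
  have s1p: "s1 > 0" using bd \<eta> s1 unfolding \<eta>_def by (cases "s1 = 0") auto
  have peru: "\<forall>s t. u s (t + 2 * pi) = u s t" and contu: "continuous_on ({0..} \<times> UNIV) (\<lambda>(s,t). u s t)"
    and C2u: "C2_on ({0<..} \<times> UNIV) u" and lapu: "\<forall>s>0. \<forall>t. laplacian_rev \<rho> u s t = 0"
    and bu: "bounded ((\<lambda>(s,t). u s t) ` ({0..} \<times> UNIV))"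
    using hu unfolding bounded_harmonic_on_end_def by auto
  have perv: "\<forall>s t. v s (t + 2 * pi) = v s t" and contv: "continuous_on ({0..} \<times> UNIV) (\<lambda>(s,t). v s t)"
    and C2v: "C2_on ({0<..} \<times> UNIV) v" and lapv: "\<forall>s>0. \<forall>t. laplacian_rev \<rho> v s t = 0"
    and bv: "bounded ((\<lambda>(s,t). v s t) ` ({0..} \<times> UNIV))"
    using hv unfolding bounded_harmonic_on_end_def by auto
  obtain Mu where Mu: "\<forall>x\<in>(\<lambda>(s,t). u s t) ` ({0..} \<times> UNIV). norm x \<le> Mu"
    using bu unfolding bounded_iff by blast
  obtain Mv where Mv: "\<forall>x\<in>(\<lambda>(s,t). v s t) ` ({0..} \<times> UNIV). norm x \<le> Mv"
    using bv unfolding bounded_iff by blast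
  have Mu': "\<And>s t. s \<ge> 0 \<Longrightarrow> u s t \<le> Mu"
  proof -
    fix s t :: real assume "s \<ge> 0"
    then have "u s t \<in> (\<lambda>(s,t). u s t) ` ({0..} \<times> UNIV)" by force
    then have "norm (u s t) \<le> Mu" using Mu by blast
    then show "u s t \<le> Mu" by simp
  qed
  have Mv': "\<And>s t. s \<ge> 0 \<Longrightarrow> - v s t \<le> Mv"
  proof -
    fix s t :: real assume "s \<ge> 0"
    then have "v s t \<in> (\<lambda>(s,t). v s t) ` ({0..} \<times> UNIV)" by force
    then have "norm (v s t) \<le> Mv" using Mv by blast
    then show "- v s t \<le> Mv" by simp
  qed
  have Hnn: "H s1 \<ge> 0" using Hmono[rule_format, of 0 s1] H0 s1 by simp
  define \<epsilon> where "\<epsilon> = \<eta> / (3 * (H s1 + 1))"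
  have \<epsilon>: "\<epsilon> > 0" unfolding \<epsilon>_def using \<eta> Hnn by simp
  have "\<eta> * H s1 < \<eta> * (H s1 + 1)" using \<eta> by simp
  then have \<epsilon>H: "\<epsilon> * H s1 < \<eta> / 3" unfolding \<epsilon>_def using Hnn \<eta> by (simp add: field_simps)
  obtain s2 where s2: "s2 \<ge> 0" "H s2 > (Mu + Mv + \<eta>) / \<epsilon>" using Hunb by blast
  define R where "R = max s2 (s1 + 1)"
  have R: "R > s1" "R \<ge> s2" "R > 0" unfolding R_def using s1 by auto
  have "H R \<ge> H s2" using Hmono s2 R by blast
  then have "H R > (Mu + Mv + \<eta>) / \<epsilon>" using s2 by simp
  then have \<epsilon>HR: "\<epsilon> * H R > Mu + Mv + \<eta>" using \<epsilon> by (simp add: pos_divide_less_eq mult.commute)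
  have Gnn: "\<And>s. s \<ge> 0 \<Longrightarrow> G s \<ge> 0" using Gmono G0 by (metis order_refl)
  define \<delta> where "\<delta> = \<eta> / (3 * (G R + 1))"
  have \<delta>: "\<delta> > 0" unfolding \<delta>_def using \<eta> Gnn[of R] R by simp
  have "\<eta> * G R < \<eta> * (G R + 1)" using \<eta> by simp
  then have \<delta>G: "\<delta> * G R < \<eta> / 3" unfolding \<delta>_def using Gnn[of R] R \<eta> by (simp add: field_simps)
  define F where "F = (\<lambda>s t. u s t - v s t - \<epsilon> * H s + \<delta> * G s)"
  have F1: "F s1 t1 > 0"
  proof -
    have "\<delta> * G s1 \<ge> 0" using \<delta> Gnn[OF s1] by simp
    moreover have "F s1 t1 = \<eta> - \<epsilon> * H s1 + \<delta> * G s1" unfolding F_def \<eta>_def by simp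
    ultimately show ?thesis using \<epsilon>H \<eta> by linarith
  qed
  have FR: "\<And>t. F R t < 0"
  proof -
    fix t
    have "u R t \<le> Mu" "- v R t \<le> Mv" using Mu' Mv' R by auto
    then show "F R t < 0" unfolding F_def using \<epsilon>HR \<delta>G \<eta> by linarith
  qed
  have F0: "\<And>t. F 0 t = 0" unfolding F_def using bd H0 G0 by simp
  have perF: "\<And>s t. \<exists>t'\<in>{0..2*pi}. F s t = F s t'"
  proof -
    fix s t
    have "\<forall>t. F s (t + 2*pi) = F s t" unfolding F_def using peru perv by simp
    then show "\<exists>t'\<in>{0..2*pi}. F s t = F s t'" by (rule periodic_red)
  qed
  define K where "K = {0..R} \<times> {0..2*pi}"
  have Ksub: "K \<subseteq> {0..} \<times> UNIV" unfolding K_def by auto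
  have cK: "continuous_on K (\<lambda>p. F (fst p) (snd p))"
  proof -
    have c1: "continuous_on K (\<lambda>p. u (fst p) (snd p))"
      using continuous_on_subset[OF contu Ksub] by (simp add: case_prod_beta)
    have c2: "continuous_on K (\<lambda>p. v (fst p) (snd p))"
      using continuous_on_subset[OF contv Ksub] by (simp add: case_prod_beta)
    have c3: "continuous_on K (\<lambda>p. H (fst p))"
      by (rule continuous_on_compose2[OF Hc[rule_format, of R] continuous_on_fst[OF continuous_on_id]])
         (auto simp: K_def)
    have c4: "continuous_on K (\<lambda>p. G (fst p))"
      by (rule continuous_on_compose2[OF Gc[rule_format, of R] continuous_on_fst[OF continuous_on_id]])
         (auto simp: K_def)
    show ?thesis unfolding F_def
      by (intro continuous_on_add continuous_on_diff continuous_on_mult continuous_on_const c1 c2 c3 c4)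
  qed
  have "compact K" unfolding K_def by (intro compact_Times compact_Icc)
  moreover have "K \<noteq> {}" unfolding K_def using R by auto
  ultimately obtain p0 where p0: "p0 \<in> K" "\<forall>y\<in>K. F (fst y) (snd y) \<le> F (fst p0) (snd p0)"
    using continuous_attains_sup[OF _ _ cK] by blast
  obtain s0 t0 where st0: "p0 = (s0, t0)" by (cases p0)
  have s0R: "0 \<le> s0" "s0 \<le> R" using p0(1) st0 unfolding K_def by auto
  have gmax: "\<And>s t. 0 \<le> s \<Longrightarrow> s \<le> R \<Longrightarrow> F s t \<le> F s0 t0"
  proof -
    fix s t :: real assume "0 \<le> s" "s \<le> R"
    obtain t' where t': "t' \<in> {0..2*pi}" "F s t = F s t'" using perF by blast
    have "(s, t') \<in> K" using t' \<open>0 \<le> s\<close> \<open>s \<le> R\<close> unfolding K_def by auto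
    then show "F s t \<le> F s0 t0" using p0(2) st0 t' by fastforce
  qed
  have "F s0 t0 > 0" using gmax[of s1 t1] F1 s1 R by linarith
  then have s0p: "s0 > 0" "s0 < R" using F0[of t0] FR[of t0] s0R
    by (metis less_eq_real_def less_irrefl, metis less_eq_real_def less_asym)
  have phid: "\<And>y. ((\<lambda>y. F s0 y) has_real_derivative (pt u s0 y - pt v s0 y)) (at y)"
  proof -
    fix y
    have "((\<lambda>y. u s0 y - v s0 y - \<epsilon> * H s0 + \<delta> * G s0) has_real_derivative (pt u s0 y - pt v s0 y - 0 + 0)) (at y)"
      by (intro DERIV_add DERIV_diff DERIV_const C2D'(2)[OF C2u s0p(1)] C2D'(2)[OF C2v s0p(1)])
    then show "((\<lambda>y. F s0 y) has_real_derivative (pt u s0 y - pt v s0 y)) (at y)" unfolding F_def by simp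
  qed
  have z1: "pt u s0 t0 - pt v s0 t0 = 0"
    by (rule DERIV_local_max[OF phid[of t0], of 1]) (use gmax s0R in auto)
  have Q: "pt (pt u) s0 t0 - pt (pt v) s0 t0 \<le> 0"
  proof (rule ccontr)
    assume "\<not> ?thesis"
    then have Qp: "pt (pt u) s0 t0 - pt (pt v) s0 t0 > 0" by simp
    have cd: "((\<lambda>y. pt u s0 y - pt v s0 y) has_real_derivative pt (pt u) s0 t0 - pt (pt v) s0 t0) (at t0)"
      by (intro DERIV_diff C2D'(3)[OF C2u s0p(1)] C2D'(3)[OF C2v s0p(1)])
    obtain b where "F s0 t0 < F s0 b"
      using rise[of 1 t0 "\<lambda>y. F s0 y" "\<lambda>y. pt u s0 y - pt v s0 y" "\<lambda>_. 1" "\<lambda>y. pt u s0 y - pt v s0 y", OF _ _ _ cd Qp]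
        phid z1 by auto
    then show False using gmax[of s0 b] s0R by linarith
  qed
  define e where "e = min s0 (R - s0)"
  have e: "e > 0" unfolding e_def using s0p by auto
  define psi' where "psi' = (\<lambda>x. ps u x t0 - ps v x t0 - \<epsilon> * (1 / \<rho> x) + \<delta> * (P x / \<rho> x))"
  have psid: "\<And>x. x > 0 \<Longrightarrow> ((\<lambda>x. F x t0) has_real_derivative psi' x) (at x)"
  proof -
    fix x :: real assume x: "x > 0"
    have "((\<lambda>x. u x t0 - v x t0 - \<epsilon> * H x + \<delta> * G x) has_real_derivative psi' x) (at x)"
      unfolding psi'_def
      by (intro DERIV_add DERIV_diff DERIV_cmult C2D'(1)[OF C2u x] C2D'(1)[OF C2v x] Hd[rule_format, OF x] Gd[rule_format, OF x])
    then show "((\<lambda>x. F x t0) has_real_derivative psi' x) (at x)" unfolding F_def by simp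
  qed
  have z2: "psi' s0 = 0"
    by (rule DERIV_local_max[OF psid[OF s0p(1)] e]) (use gmax e_def in auto)
  define gg where "gg = (\<lambda>x. \<rho> x * ps u x t0 - \<rho> x * ps v x t0 - \<epsilon> + \<delta> * P x)"
  have ggk: "\<forall>x\<in>{s0-e<..<s0+e}. \<rho> x > 0 \<and> gg x = \<rho> x * psi' x"
  proof
    fix x assume "x \<in> {s0-e<..<s0+e}"
    then have x: "x > 0" unfolding e_def by auto
    then have "\<rho> x > 0" using rpos by auto
    then show "\<rho> x > 0 \<and> gg x = \<rho> x * psi' x" unfolding gg_def psi'_def by (simp add: field_simps)
  qed
  have rs0: "\<rho> s0 > 0" using rpos s0p by auto
  have gg0: "gg s0 = 0" using ggk e z2 by auto
  define Du where "Du = deriv (\<lambda>x. \<rho> x * ps u x t0) s0"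
  define Dv where "Dv = deriv (\<lambda>x. \<rho> x * ps v x t0) s0"
  have dDu: "((\<lambda>x. \<rho> x * ps u x t0) has_real_derivative Du) (at s0)"
    unfolding Du_def DERIV_deriv_iff_real_differentiable
    using rdiff s0p C2D(3)[OF C2u s0p(1)] by (intro differentiable_mult) auto
  have dDv: "((\<lambda>x. \<rho> x * ps v x t0) has_real_derivative Dv) (at s0)"
    unfolding Dv_def DERIV_deriv_iff_real_differentiable
    using rdiff s0p C2D(3)[OF C2v s0p(1)] by (intro differentiable_mult) auto
  have "Du / \<rho> s0 + pt (pt u) s0 t0 / (\<rho> s0)^2 = 0"
    using lapu s0p unfolding laplacian_rev_def Du_def by auto
  then have Du: "Du = - pt (pt u) s0 t0 / \<rho> s0" using rs0 by (simp add: field_simps power2_eq_square)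
  have "Dv / \<rho> s0 + pt (pt v) s0 t0 / (\<rho> s0)^2 = 0"
    using lapv s0p unfolding laplacian_rev_def Dv_def by auto
  then have Dv: "Dv = - pt (pt v) s0 t0 / \<rho> s0" using rs0 by (simp add: field_simps power2_eq_square)
  have "Du - Dv = - (pt (pt u) s0 t0 - pt (pt v) s0 t0) / \<rho> s0" using Du Dv by (simp add: diff_divide_distrib)
  then have DuDv: "Du - Dv \<ge> 0" using Q rs0 by simp
  have cpos: "Du - Dv - 0 + \<delta> * \<rho> s0 > 0" using DuDv mult_pos_pos[OF \<delta> rs0] by simp
  have cd: "(gg has_real_derivative Du - Dv - 0 + \<delta> * \<rho> s0) (at s0)"
    unfolding gg_def
    by (intro DERIV_add DERIV_diff DERIV_cmult DERIV_const dDu dDv Pd[rule_format, OF s0p(1)])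
  have fd: "\<forall>x\<in>{s0-e<..<s0+e}. ((\<lambda>x. F x t0) has_real_derivative psi' x) (at x)"
    using psid unfolding e_def by auto
  obtain b where b: "s0 < b" "b < s0 + e" "F s0 t0 < F b t0"
    using rise[OF e fd ggk cd cpos gg0] by blast
  have "b \<le> R" using b(2) unfolding e_def by linarith
  then show False using gmax[of b t0] s0p b by linarith
qed

lemma indef:
  fixes f :: "real \<Rightarrow> real"
  assumes fc: "continuous_on {0..} f" and fnn: "\<forall>x\<ge>0. f x \<ge> 0"
  shows "\<forall>s>0. ((\<lambda>s. integral {0..s} f) has_real_derivative f s) (at s)"
    and "continuous_on {0..} (\<lambda>s. integral {0..s} f)"
    and "integral {0..0} f = 0"
    and "\<forall>s r. 0 \<le> s \<longrightarrow> s \<le> r \<longrightarrow> integral {0..s} f \<le> integral {0..r} f"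
    and "\<forall>s. integral {0..s} f \<ge> 0"
proof -
  have fcb: "\<And>b. continuous_on {0..b} f" using continuous_on_subset[OF fc] by auto
  have dw: "\<And>s b. s \<in> {0..b} \<Longrightarrow> ((\<lambda>s. integral {0..s} f) has_real_derivative f s) (at s within {0..b})"
    using integral_has_vector_derivative[OF fcb] by (simp add: has_real_derivative_iff_has_vector_derivative)
  show d: "\<forall>s>0. ((\<lambda>s. integral {0..s} f) has_real_derivative f s) (at s)"
  proof (intro allI impI)
    fix s :: real assume s: "s > 0"
    have "s \<in> interior {0..s+1}" using s by simp
    then show "((\<lambda>s. integral {0..s} f) has_real_derivative f s) (at s)"
      using dw[of s "s+1"] s at_within_interior by fastforce
  qed
  have c1: "continuous_on {0..1} (\<lambda>s. integral {0..s} f)"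
    by (rule indefinite_integral_continuous_1[OF integrable_continuous_real[OF fcb]])
  have c2: "continuous_on {1..} (\<lambda>s. integral {0..s} f)"
  proof (intro continuous_at_imp_continuous_on ballI)
    fix x :: real assume "x \<in> {1..}"
    then have "x > 0" by simp
    then show "isCont (\<lambda>s. integral {0..s} f) x" using d DERIV_isCont by blast
  qed
  have "continuous_on ({0..1} \<union> {1..}) (\<lambda>s. integral {0..s} f)"
    by (rule continuous_on_closed_Un[OF _ _ c1 c2]) auto
  moreover have "{0..1} \<union> {1..} = {0::real..}" by auto
  ultimately show "continuous_on {0..} (\<lambda>s. integral {0..s} f)" by simp
  show "integral {0..0} f = 0" by simp
  show "\<forall>s r. 0 \<le> s \<longrightarrow> s \<le> r \<longrightarrow> integral {0..s} f \<le> integral {0..r} f"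
  proof (intro allI impI)
    fix s r :: real assume "0 \<le> s" "s \<le> r"
    then show "integral {0..s} f \<le> integral {0..r} f"
      using fnn by (intro integral_subset_le integrable_continuous_real fcb) auto
  qed
  show "\<forall>s. integral {0..s} f \<ge> 0"
  proof
    fix s :: real
    show "integral {0..s} f \<ge> 0"
    proof (cases "s \<ge> 0")
      case True
      then show ?thesis using fnn by (intro integral_nonneg integrable_continuous_real fcb) auto
    next
      case False
      then show ?thesis by simp
    qed
  qed
qed

theorem proposition5p1:
  fixes \<gamma>1 \<gamma>2 \<gamma>1' \<gamma>2' :: "real \<Rightarrow> real"
  assumes d1: "\<forall>s\<ge>0. (\<gamma>1 has_real_derivative \<gamma>1' s) (at s within {0..})"
      and d2: "\<forall>s\<ge>0. (\<gamma>2 has_real_derivative \<gamma>2' s) (at s within {0..})"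
      and c1: "continuous_on {0..} \<gamma>1'"
      and c2: "continuous_on {0..} \<gamma>2'"
      and pos1: "\<forall>s\<ge>0. \<gamma>1 s > 0"
      and pos2: "\<forall>s\<ge>0. \<gamma>2 s > 0"
      and arclen: "\<forall>s\<ge>0. ((\<gamma>1' s)^2 + (\<gamma>2' s)^2) / (\<gamma>2 s)^2 = 1"
      and nonpar: "\<not> parabolic_end (\<lambda>s. \<gamma>1 s / \<gamma>2 s)"
  shows "bdd_above (\<gamma>1 ` {0..})"
proof (rule ccontr)
  assume nb: "\<not> bdd_above (\<gamma>1 ` {0..})"
  then have unb: "\<And>B. \<exists>s\<ge>0. \<gamma>1 s > B"
    unfolding bdd_above_def by (auto simp: not_le)
  define \<rho> where "\<rho> = (\<lambda>s. \<gamma>1 s / \<gamma>2 s)"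
  have g1c: "continuous_on {0..} \<gamma>1"
    unfolding continuous_on_eq_continuous_within
  proof
    fix x :: real assume "x \<in> {0..}"
    then have "(\<gamma>1 has_real_derivative \<gamma>1' x) (at x within {0..})" using d1 by simp
    then show "continuous (at x within {0..}) \<gamma>1" by (rule DERIV_continuous)
  qed
  have g2c: "continuous_on {0..} \<gamma>2"
    unfolding continuous_on_eq_continuous_within
  proof
    fix x :: real assume "x \<in> {0..}"
    then have "(\<gamma>2 has_real_derivative \<gamma>2' x) (at x within {0..})" using d2 by simp
    then show "continuous (at x within {0..}) \<gamma>2" by (rule DERIV_continuous)
  qed
  have d1a: "\<And>s. s > 0 \<Longrightarrow> (\<gamma>1 has_real_derivative \<gamma>1' s) (at s)"
  proof -
    fix s :: real assume s: "s > 0"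
    have "at s within {0..} = at s" by (rule at_within_interior) (use s in simp)
    moreover have "(\<gamma>1 has_real_derivative \<gamma>1' s) (at s within {0..})" using d1 s by simp
    ultimately show "(\<gamma>1 has_real_derivative \<gamma>1' s) (at s)" by simp
  qed
  have d2a: "\<And>s. s > 0 \<Longrightarrow> (\<gamma>2 has_real_derivative \<gamma>2' s) (at s)"
  proof -
    fix s :: real assume s: "s > 0"
    have "at s within {0..} = at s" by (rule at_within_interior) (use s in simp)
    moreover have "(\<gamma>2 has_real_derivative \<gamma>2' s) (at s within {0..})" using d2 s by simp
    ultimately show "(\<gamma>2 has_real_derivative \<gamma>2' s) (at s)" by simp
  qed
  have rpos: "\<forall>s\<ge>0. \<rho> s > 0" unfolding \<rho>_def using pos1 pos2 by simp
  have rc: "continuous_on {0..} \<rho>" unfolding \<rho>_def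
    using pos2 by (intro continuous_on_divide g1c g2c) auto
  have rdiff: "\<forall>s>0. \<rho> differentiable (at s)"
  proof (intro allI impI)
    fix s :: real assume s: "s > 0"
    have "(\<rho> has_real_derivative (\<gamma>1' s * \<gamma>2 s - \<gamma>1 s * \<gamma>2' s) / (\<gamma>2 s * \<gamma>2 s)) (at s)"
      unfolding \<rho>_def using pos2[rule_format, of s] s by (intro DERIV_divide d1a d2a) auto
    then show "\<rho> differentiable (at s)" using real_differentiable_def by blast
  qed
  define H where "H = (\<lambda>s. integral {0..s} (\<lambda>x. 1 / \<rho> x))"
  define P where "P = (\<lambda>s. integral {0..s} \<rho>)"
  define G where "G = (\<lambda>s. integral {0..s} (\<lambda>x. P x / \<rho> x))"
  have ic: "continuous_on {0..} (\<lambda>x. 1 / \<rho> x)" using rpos by (intro continuous_on_divide rc) auto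
  note IH = indef[OF ic, folded H_def]
  have "\<forall>x\<ge>0. 1 / \<rho> x \<ge> 0" using rpos by (simp add: less_imp_le)
  note IH = IH[OF this]
  have "\<forall>x\<ge>0. \<rho> x \<ge> 0" using rpos by (simp add: less_imp_le)
  note IP = indef[OF rc this, folded P_def]
  have pc: "continuous_on {0..} (\<lambda>x. P x / \<rho> x)" using rpos by (intro continuous_on_divide rc IP(2)) auto
  have "\<forall>x\<ge>0. P x / \<rho> x \<ge> 0" using rpos IP(5) unfolding P_def by (auto intro!: divide_nonneg_pos)
  note IG = indef[OF pc this, folded G_def]
  have Hc: "\<forall>R. continuous_on {0..R} H" using continuous_on_subset[OF IH(2)] by auto
  have Gc: "\<forall>R. continuous_on {0..R} G" using continuous_on_subset[OF IG(2)] by auto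
  have Hm: "\<forall>s r. 0 \<le> s \<longrightarrow> s \<le> r \<longrightarrow> H s \<le> H r" unfolding H_def by (rule IH(4))
  have Gm: "\<forall>s r. 0 \<le> s \<longrightarrow> s \<le> r \<longrightarrow> G s \<le> G r" unfolding G_def by (rule IG(4))
  have H0: "H 0 = 0" "G 0 = 0" unfolding H_def G_def by simp_all
  have logb: "\<And>s. s > 0 \<Longrightarrow> ln (\<gamma>1 s) - ln (\<gamma>1 0) \<le> H s"
  proof -
    fix s :: real assume s: "s > 0"
    have "(\<lambda>x. ln (\<gamma>1 x) - H x) 0 \<ge> (\<lambda>x. ln (\<gamma>1 x) - H x) s"
    proof (rule DERIV_nonpos_imp_decreasing_open[of 0 s "\<lambda>x. ln (\<gamma>1 x) - H x"])
      show "0 \<le> s" using s by simp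
      show "continuous_on {0..s} (\<lambda>x. ln (\<gamma>1 x) - H x)"
        using pos1 by (intro continuous_on_diff continuous_on_ln continuous_on_subset[OF g1c]
            continuous_on_subset[OF IH(2)]) auto
      fix x :: real assume x: "0 < x" "x < s"
      have g: "\<gamma>1 x > 0" "\<gamma>2 x > 0" using pos1 pos2 x by auto
      have "(\<gamma>1' x)^2 + (\<gamma>2' x)^2 = (\<gamma>2 x)^2" using arclen x g by (simp add: divide_eq_eq)
      then have sq: "(\<gamma>1' x)^2 \<le> (\<gamma>2 x)^2" by (metis le_add_same_cancel1 zero_le_power2)
      have le: "\<gamma>1' x \<le> \<gamma>2 x" by (rule power2_le_imp_le[OF sq less_imp_le[OF g(2)]])
      have A: "((\<lambda>x. ln (\<gamma>1 x)) has_real_derivative (1 / \<gamma>1 x * \<gamma>1' x)) (at x)"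
        using DERIV_ln_divide[THEN DERIV_chain2, OF g(1) d1a[OF x(1)]] by simp
      have B: "(H has_real_derivative 1 / \<rho> x) (at x)" using IH(1) x by simp
      have "((\<lambda>x. ln (\<gamma>1 x) - H x) has_real_derivative (1 / \<gamma>1 x * \<gamma>1' x - 1 / \<rho> x)) (at x)"
        by (rule DERIV_diff[OF A B])
      moreover have "1 / \<gamma>1 x * \<gamma>1' x - 1 / \<rho> x \<le> 0"
      proof -
        have "1 / \<rho> x = \<gamma>2 x / \<gamma>1 x" unfolding \<rho>_def by simp
        moreover have "\<gamma>1' x / \<gamma>1 x \<le> \<gamma>2 x / \<gamma>1 x" using le g by (simp add: divide_right_mono)
        ultimately show ?thesis by simp
      qed
      ultimately show "\<exists>y. ((\<lambda>x. ln (\<gamma>1 x) - H x) has_real_derivative y) (at x) \<and> y \<le> 0" by blast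
    qed
    then show "ln (\<gamma>1 s) - ln (\<gamma>1 0) \<le> H s" using H0 by simp
  qed
  have Hunb: "\<forall>K. \<exists>s\<ge>0. H s > K"
  proof
    fix K :: real
    obtain s where s: "s \<ge> 0" "\<gamma>1 s > \<gamma>1 0 * exp K" using unb by blast
    have g0: "\<gamma>1 0 > 0" using pos1 by simp
    show "\<exists>s\<ge>0. H s > K"
    proof (cases "s = 0")
      case True
      then have "exp K < 1" using s g0 by simp
      then have "K < 0" by simp
      then show ?thesis using H0 by (intro exI[of _ 0]) auto
    next
      case False
      then have sp: "s > 0" using s by simp
      have p1: "\<gamma>1 0 * exp K > 0" using g0 by simp
      have p2: "\<gamma>1 s > 0" using pos1 s by simp
      have "ln (\<gamma>1 s) > ln (\<gamma>1 0 * exp K)" using ln_less_cancel_iff[OF p1 p2] s(2) by blast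
      then have "ln (\<gamma>1 s) > ln (\<gamma>1 0) + K" using g0 by (simp add: ln_mult)
      then show ?thesis using logb[OF sp] sp by (intro exI[of _ s]) auto
    qed
  qed
  have par: "parabolic_end \<rho>"
    unfolding parabolic_end_def
  proof (intro allI impI)
    fix u v :: "real \<Rightarrow> real \<Rightarrow> real" and s t :: real
    assume hu: "bounded_harmonic_on_end \<rho> u" and hv: "bounded_harmonic_on_end \<rho> v"
      and bd: "\<forall>t. u 0 t = v 0 t" and s: "0 \<le> s"
    have bd': "\<forall>t. v 0 t = u 0 t" using bd by simp
    show "u s t = v s t"
      using maxp[OF rpos rdiff IH(1) IG(1) IP(1) Hc Gc H0 Hm Gm Hunb hu hv bd s]
        maxp[OF rpos rdiff IH(1) IG(1) IP(1) Hc Gc H0 Hm Gm Hunb hv hu bd' s] by (rule antisym)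
  qed
  then show False using nonpar unfolding \<rho>_def by simp
qed

end
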